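(* Let $d,p\ge1$, let $\eta:\mathbb R^d\to\mathbb R$ be measurable, let $P_1,\dots,P_d$ be probability distributions on $\mathbb R$, let $\Theta\subset\mathbb R^p$ be compact and $(C_\theta)_{\theta\in\Theta}$ a family of $d$-dimensional copulas; let $P_\theta$ be the distribution on $\mathbb R^d$ with marginals $P_1,\dots,P_d$ and copula $C_\theta$, and $G_\theta$ the CDF of $\eta(\mathbf X)$ for $\mathbf X\sim P_\theta$. For a CDF $G$ let $G^{-1}(\alpha)=\inf\{y:G(y)\ge\alpha\}$. Fix $\alpha\in(0,1)$ and assume: (A2) for every $\theta\in\Theta$, $G_\theta$ is continuous; (A3) for every $\theta\in\Theta$, $G_\theta$ is strictly increasing, and there is a function $\underline{\epsilon}_\Theta:(0,\infty)\to(0,\infty)$ with $\min\big(G_\theta(y_\theta+\delta)-G_\theta(y_\theta),\,G_\theta(y_\theta)-G_\theta(y_\theta-\delta)\big)\ge\underline{\epsilon}_\Theta(\delta)$ for all $\theta\in\Theta$, $\delta>0$, where $y_\theta=G_\theta^{-1}(\alpha)$. Let $(\Theta_{K_n})_{n\ge1}$ be finite subsets of $\Theta$ of cardinality $K_n\le K n^\beta$ for some constants $K,\beta>0$. For each $n$ and $\theta\in\Theta_{K_n}$ let $\mathbf X_1,\dots,\mathbf X_n$ be i.i.d. with law $P_\theta$ (all on a common probability space), $Y_i=\eta(\mathbf X_i)$, $\widehat G_\theta(y)=\frac1n\sum_{i=1}^n\mathbf 1_{Y_i\le y}$ and $\widehat G_\theta^{-1}(\alpha)=\inf\{y:\widehat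 G_\theta(y)\ge\alpha\}$. Then for every $\epsilon>0$, $$\mathbb P\Big(\sup_{\theta\in\Theta_{K_n}}\big|\widehat G_\theta^{-1}(\alpha)-G_\theta^{-1}(\alpha)\big|>\epsilon\Big)\xrightarrow[n\to\infty]{}0.$$
   Context: A $d$-dimensional copula is a CDF on $[0,1]^d$ with uniform marginals; $P_\theta$ has joint CDF $C_\theta(F_1(x_1),\dots,F_d(x_d))$ with $F_j$ the CDF of $P_j$. *)

theory Defs
  imports "HOL-Probability.Probability"
begin

definition unit_cube :: "(real^'d) set" where
  "unit_cube = {u. \<forall>i. 0 \<le> u$i \<and> u$i \<le> 1}"

definition is_copula :: "(real^'d \<Rightarrow> real) \<Rightarrow> bool" where
  "is_copula C \<longleftrightarrow>
     (\<exists>\<mu>. prob_space \<mu> \<and> sets \<mu> = sets (borel :: (real^'d) measure) \<and>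
          measure \<mu> unit_cube = 1 \<and>
          (\<forall>i t. 0 \<le> t \<and> t \<le> 1 \<longrightarrow> measure \<mu> {x. x$i \<le> t} = t) \<and>
          (\<forall>u\<in>unit_cube. C u = measure \<mu> {x. \<forall>i. x$i \<le> u$i}))"

definition cdf_of :: "real measure \<Rightarrow> real \<Rightarrow> real" where
  "cdf_of P t = measure P {..t}"

definition gen_inv :: "(real \<Rightarrow> real) \<Rightarrow> real \<Rightarrow> real" where
  "gen_inv G \<alpha> = Inf {y. G y \<ge> \<alpha>}"

end

theory Submission
  imports Defs "HOL-Real_Asymp.Real_Asymp"
begin

lemma hoeff_ind:
  fixes M :: "'a measure" and Xs :: "nat \<Rightarrow> 'a \<Rightarrow> 'b::topological_space" and \<eta> :: "'b \<Rightarrow> real"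
  assumes M: "prob_space M" and n: "n \<ge> 1"
    and ind: "prob_space.indep_vars M (\<lambda>_. borel) Xs {1..n}"
    and dis: "\<And>i. i\<in>{1..n} \<Longrightarrow> distr M borel (Xs i) = Q"
    and eta: "\<eta> \<in> borel_measurable borel" and c: "c \<ge> 0"
  shows "{\<omega>\<in>space M. (\<Sum>i\<in>{1..n}. if \<eta> (Xs i \<omega>) \<le> t then 1 else 0::real) \<le> real n * measure Q {z. \<eta> z \<le> t} - real n*c} \<in> sets M"
    "{\<omega>\<in>space M. (\<Sum>i\<in>{1..n}. if \<eta> (Xs i \<omega>) \<le> t then 1 else 0::real) \<ge> real n * measure Q {z. \<eta> z \<le> t} + real n*c} \<in> sets M"
    "measure M {\<omega>\<in>space M. (\<Sum>i\<in>{1..n}. if \<eta> (Xs i \<omega>) \<le> t then 1 else 0::real) \<le> real n * measure Q {z. \<eta> z \<le> t} - real n*c} \<le> exp (-2*real n*c^2)"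
    "measure M {\<omega>\<in>space M. (\<Sum>i\<in>{1..n}. if \<eta> (Xs i \<omega>) \<le> t then 1 else 0::real) \<ge> real n * measure Q {z. \<eta> z \<le> t} + real n*c} \<le> exp (-2*real n*c^2)"
proof -
  interpret prob_space M by (rule M)
  have meas: "Xs i \<in> borel_measurable M" if "i \<in> {1..n}" for i
    using ind that unfolding indep_vars_def by blast
  define g where "g = (\<lambda>z. if \<eta> z \<le> t then 1 else 0::real)"
  have gm: "g \<in> borel_measurable borel" unfolding g_def using eta by measurable
  define Z where "Z = (\<lambda>i \<omega>. g (Xs i \<omega>))"
  have indZ: "indep_vars (\<lambda>_. borel) Z {1..n}"
    unfolding Z_def by (rule indep_vars_compose2[OF ind]) (use gm in auto)
  have Zm: "Z i \<in> borel_measurable M" if "i \<in> {1..n}" for i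
    unfolding Z_def using gm meas[OF that] by measurable
  have Aset: "{z. \<eta> z \<le> t} \<in> sets borel" using eta by measurable
  have EZ: "expectation (Z i) = measure Q {z. \<eta> z \<le> t}" if i: "i \<in> {1..n}" for i
  proof -
    have "expectation (Z i) = integral\<^sup>L (distr M borel (Xs i)) g"
      unfolding Z_def by (rule integral_distr[symmetric]) (use meas[OF i] gm in auto)
    also have "\<dots> = integral\<^sup>L Q g" using dis[OF i] by simp
    also have "g = indicator {z. \<eta> z \<le> t}" unfolding g_def by (auto simp: fun_eq_iff indicator_def)
    also have "integral\<^sup>L Q (indicator {z. \<eta> z \<le> t}) = measure Q {z. \<eta> z \<le> t}"
    proof -
      have "space Q = UNIV" using dis[OF i] by (metis space_distr space_borel)
      then show ?thesis by simp
    qed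
    finally show ?thesis .
  qed
  have mu: "(\<Sum>i\<in>{1..n}. expectation (Z i)) = real n * measure Q {z. \<eta> z \<le> t}"
    using EZ by simp
  interpret H: Hoeffding_ineq M "{1..n}" Z "\<lambda>_. 0" "\<lambda>_. 1" "\<Sum>i\<in>{1..n}. expectation (Z i)"
  proof unfold_locales
    show "finite {1..n}" by simp
    show "indep_vars (\<lambda>_. borel) Z {1..n}" by (rule indZ)
  next
    fix i assume "i \<in> {1..n}"
    have "\<And>x. Z i x \<in> {0..1}" unfolding Z_def g_def by simp
    then show "AE x in M. Z i x \<in> {0..1}" by simp
  qed
  have pos: "(\<Sum>i\<in>{1..n}. ((\<lambda>_. 1::real) i - (\<lambda>_. 0) i)\<^sup>2) > 0" using n by simp
  have nc: "real n*c \<ge> 0" using c by simp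
  have ex: "exp (-2 * (real n*c)\<^sup>2 / (\<Sum>i\<in>{1..n}. ((\<lambda>_. 1::real) i - (\<lambda>_. 0) i)\<^sup>2)) = exp (-2*real n*c^2)"
    using n by (simp add: power2_eq_square)
  have sm: "(\<lambda>\<omega>. \<Sum>i\<in>{1..n}. Z i \<omega>) \<in> borel_measurable M"
    using Zm by (intro borel_measurable_sum) auto
  show "{\<omega>\<in>space M. (\<Sum>i\<in>{1..n}. if \<eta> (Xs i \<omega>) \<le> t then 1 else 0::real) \<le> real n * measure Q {z. \<eta> z \<le> t} - real n*c} \<in> sets M"
    using sm unfolding Z_def g_def by measurable
  show "{\<omega>\<in>space M. (\<Sum>i\<in>{1..n}. if \<eta> (Xs i \<omega>) \<le> t then 1 else 0::real) \<ge> real n * measure Q {z. \<eta> z \<le> t} + real n*c} \<in> sets M"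
    using sm unfolding Z_def g_def by measurable
  show "measure M {\<omega>\<in>space M. (\<Sum>i\<in>{1..n}. if \<eta> (Xs i \<omega>) \<le> t then 1 else 0::real) \<le> real n * measure Q {z. \<eta> z \<le> t} - real n*c} \<le> exp (-2*real n*c^2)"
    using H.Hoeffding_ineq_le[OF nc pos] unfolding ex mu by (simp add: Z_def g_def)
  show "measure M {\<omega>\<in>space M. (\<Sum>i\<in>{1..n}. if \<eta> (Xs i \<omega>) \<le> t then 1 else 0::real) \<ge> real n * measure Q {z. \<eta> z \<le> t} + real n*c} \<le> exp (-2*real n*c^2)"
    using H.Hoeffding_ineq_ge[OF nc pos] unfolding ex mu by (simp add: Z_def g_def)
qed

lemma lim_test:
  fixes a b K :: real assumes "a > 0"
  shows "(\<lambda>n::nat. 2 * K * real n powr b * exp (-a * real n)) \<longlonglongrightarrow> 0"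
  using assms by real_asymp

lemma emp_inv:
  fixes ys :: "nat \<Rightarrow> real"
  assumes n: "n \<ge> 1" and a: "0 < \<alpha>" "\<alpha> \<le> 1"
    and big: "\<bar>gen_inv (\<lambda>y. (\<Sum>i\<in>{1..n}. if ys i \<le> y then 1 else 0) / real n) \<alpha> - y0\<bar> > \<epsilon>"
  shows "(\<Sum>i\<in>{1..n}. if ys i \<le> y0 + \<epsilon> then 1 else 0) / real n < \<alpha> \<or>
         (\<Sum>i\<in>{1..n}. if ys i \<le> y0 - \<epsilon> then 1 else 0) / real n \<ge> \<alpha>"
proof -
  define F where "F = (\<lambda>y. (\<Sum>i\<in>{1..n}. if ys i \<le> y then 1 else 0) / real n)"
  define S where "S = {y. F y \<ge> \<alpha>}"
  define B where "B = (\<Sum>i\<in>{1..n}. \<bar>ys i\<bar>)"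
  have yB: "\<bar>ys i\<bar> \<le> B" if "i \<in> {1..n}" for i
    unfolding B_def by (rule member_le_sum) (use that in auto)
  have Fmono: "F y \<le> F y'" if "y \<le> y'" for y y'
    unfolding F_def by (intro divide_right_mono sum_mono) (use that in auto)
  have low: "y \<ge> -B" if "y \<in> S" for y
  proof (rule ccontr)
    assume "\<not> y \<ge> -B"
    then have "\<forall>i\<in>{1..n}. \<not> ys i \<le> y" using yB by force
    then have "F y = 0" unfolding F_def by simp
    then show False using that a unfolding S_def by simp
  qed
  have bdd: "bdd_below S" by (rule bdd_belowI[of _ "-B"]) (use low in auto)
  have "F B = 1" unfolding F_def using yB n by (simp add: abs_le_iff)
  then have ne: "B \<in> S" unfolding S_def using a by simp
  have gi: "gen_inv F \<alpha> = Inf S" unfolding gen_inv_def S_def by simp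
  show ?thesis
  proof (cases "gen_inv F \<alpha> > y0 + \<epsilon>")
    case True
    have "\<not> F (y0 + \<epsilon>) \<ge> \<alpha>"
    proof
      assume "F (y0 + \<epsilon>) \<ge> \<alpha>"
      then have "y0 + \<epsilon> \<in> S" unfolding S_def by simp
      then have "Inf S \<le> y0 + \<epsilon>" using bdd by (rule cInf_lower)
      then show False using True gi by simp
    qed
    then show ?thesis unfolding F_def by simp
  next
    case False
    then have "gen_inv F \<alpha> < y0 - \<epsilon>" using big unfolding F_def by auto
    then have "Inf S < y0 - \<epsilon>" using gi by simp
    then obtain s where "s \<in> S" "s < y0 - \<epsilon>" using cInf_less_iff[of S] ne bdd by auto
    then have "F (y0 - \<epsilon>) \<ge> \<alpha>" using Fmono[of s "y0 - \<epsilon>"] unfolding S_def by simp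
    then show ?thesis unfolding F_def by simp
  qed
qed

lemma cdf_inv:
  fixes G :: "real \<Rightarrow> real"
  assumes top: "(G \<longlongrightarrow> 1) at_top" and bot: "(G \<longlongrightarrow> 0) at_bot"
    and cont: "continuous_on UNIV G" and a: "0 < \<alpha>" "\<alpha> < 1"
  shows "G (gen_inv G \<alpha>) = \<alpha>"
proof -
  define S where "S = {y. G y \<ge> \<alpha>}"
  have "eventually (\<lambda>y. G y > \<alpha>) at_top" using top a by (intro order_tendstoD) auto
  then obtain y1 where "G y1 > \<alpha>" by (auto simp: eventually_at_top_linorder)
  then have "y1 \<in> S" unfolding S_def by simp
  then have ne: "S \<noteq> {}" by blast
  have "eventually (\<lambda>y. G y < \<alpha>) at_bot" using bot a by (intro order_tendstoD) auto
  then obtain b where b: "\<And>y. y \<le> b \<Longrightarrow> G y < \<alpha>" by (auto simp: eventually_at_bot_linorder)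
  have bdd: "bdd_below S" unfolding S_def
  proof (rule bdd_belowI[of _ b])
    fix x assume "x \<in> {y. \<alpha> \<le> G y}"
    then show "b \<le> x" using b[of x] by force
  qed
  have cl: "closed S" unfolding S_def using cont by (intro closed_Collect_le continuous_on_const) auto
  define y0 where "y0 = Inf S"
  have "y0 \<in> S" unfolding y0_def using closed_contains_Inf[OF ne bdd cl] .
  then have ge: "G y0 \<ge> \<alpha>" unfolding S_def by simp
  have lt: "G y < \<alpha>" if "y < y0" for y
  proof (rule ccontr)
    assume "\<not> G y < \<alpha>"
    then have "y \<in> S" unfolding S_def by simp
    then have "y0 \<le> y" unfolding y0_def using bdd by (rule cInf_lower)
    then show False using that by simp
  qed
  have "(G \<longlongrightarrow> G y0) (at_left y0)"
    using cont by (metis continuous_on_def UNIV_I tendsto_within_subset subset_UNIV)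
  moreover have "eventually (\<lambda>y. \<alpha> \<ge> G y) (at_left y0)"
    using lt by (auto simp: eventually_at_left_real[of "y0 - 1" y0] intro: less_imp_le
        intro!: eventually_at_leftI[of "y0 - 1"])
  ultimately have "G y0 \<le> \<alpha>" by (rule tendsto_upperbound) simp
  with ge show ?thesis unfolding y0_def S_def gen_inv_def by simp
qed

theorem proposition1:
  fixes \<eta> :: "real^'d \<Rightarrow> real"
    and Pm :: "'d \<Rightarrow> real measure"
    and \<Theta> :: "(real^'p) set"
    and C :: "real^'p \<Rightarrow> real^'d \<Rightarrow> real"
    and P :: "real^'p \<Rightarrow> (real^'d) measure"
    and G :: "real^'p \<Rightarrow> real \<Rightarrow> real"
    and \<alpha> :: real
    and \<Theta>n :: "nat \<Rightarrow> (real^'p) set"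
    and K \<beta> :: real
    and M :: "'a measure"
    and X :: "nat \<Rightarrow> real^'p \<Rightarrow> nat \<Rightarrow> 'a \<Rightarrow> real^'d"
    and \<epsilon> :: real
  assumes eta_meas: "\<eta> \<in> borel_measurable borel"
    and marg_prob: "\<And>j. prob_space (Pm j)"
    and marg_sets: "\<And>j. sets (Pm j) = sets borel"
    and Theta_compact: "compact \<Theta>"
    and copula: "\<And>\<theta>. \<theta> \<in> \<Theta> \<Longrightarrow> is_copula (C \<theta>)"
    and P_prob: "\<And>\<theta>. \<theta> \<in> \<Theta> \<Longrightarrow> prob_space (P \<theta>)"
    and P_sets: "\<And>\<theta>. \<theta> \<in> \<Theta> \<Longrightarrow> sets (P \<theta>) = sets borel"
    and P_cdf: "\<And>\<theta> x. \<theta> \<in> \<Theta> \<Longrightarrow>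
        measure (P \<theta>) {z. \<forall>i. z$i \<le> x$i} = C \<theta> (\<chi> i. cdf_of (Pm i) (x$i))"
    and G_def: "\<And>\<theta> y. \<theta> \<in> \<Theta> \<Longrightarrow> G \<theta> y = measure (P \<theta>) {z. \<eta> z \<le> y}"
    and alpha: "0 < \<alpha>" "\<alpha> < 1"
    and A2: "\<And>\<theta>. \<theta> \<in> \<Theta> \<Longrightarrow> continuous_on UNIV (G \<theta>)"
    and A3_mono: "\<And>\<theta>. \<theta> \<in> \<Theta> \<Longrightarrow> strict_mono (G \<theta>)"
    and A3_unif: "\<exists>e :: real \<Rightarrow> real. (\<forall>\<delta>>0. e \<delta> > 0) \<and>
        (\<forall>\<theta>\<in>\<Theta>. \<forall>\<delta>>0.
           min (G \<theta> (gen_inv (G \<theta>) \<alpha> + \<delta>) - G \<theta> (gen_inv (G \<theta>) \<alpha>))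
               (G \<theta> (gen_inv (G \<theta>) \<alpha>) - G \<theta> (gen_inv (G \<theta>) \<alpha> - \<delta>)) \<ge> e \<delta>)"
    and grid_sub: "\<And>n. n \<ge> 1 \<Longrightarrow> \<Theta>n n \<subseteq> \<Theta>"
    and grid_fin: "\<And>n. n \<ge> 1 \<Longrightarrow> finite (\<Theta>n n)"
    and K_pos: "K > 0" and beta_pos: "\<beta> > 0"
    and grid_card: "\<And>n. n \<ge> 1 \<Longrightarrow> real (card (\<Theta>n n)) \<le> K * real n powr \<beta>"
    and M_prob: "prob_space M"
    and X_indep: "\<And>n \<theta>. n \<ge> 1 \<Longrightarrow> \<theta> \<in> \<Theta>n n \<Longrightarrow>
        prob_space.indep_vars M (\<lambda>_. borel) (X n \<theta>) {1..n}"
    and X_distr: "\<And>n \<theta> i. n \<ge> 1 \<Longrightarrow> \<theta> \<in> \<Theta>n n \<Longrightarrow> i \<in> {1..n} \<Longrightarrow>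
        distr M borel (X n \<theta> i) = P \<theta>"
    and eps_pos: "\<epsilon> > 0"
  shows "(\<lambda>n. measure M {\<omega> \<in> space M. \<exists>\<theta>\<in>\<Theta>n n.
            \<bar>gen_inv (\<lambda>y. (\<Sum>i\<in>{1..n}. if \<eta> (X n \<theta> i \<omega>) \<le> y then 1 else 0) / real n) \<alpha>
             - gen_inv (G \<theta>) \<alpha>\<bar> > \<epsilon>}) \<longlonglongrightarrow> 0"
proof -
  interpret Mp: prob_space M by (rule M_prob)
  obtain e where epos: "\<forall>\<delta>>0. e \<delta> > 0" and eb: "\<forall>\<theta>\<in>\<Theta>. \<forall>\<delta>>0.
           min (G \<theta> (gen_inv (G \<theta>) \<alpha> + \<delta>) - G \<theta> (gen_inv (G \<theta>) \<alpha>))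
               (G \<theta> (gen_inv (G \<theta>) \<alpha>) - G \<theta> (gen_inv (G \<theta>) \<alpha> - \<delta>)) \<ge> e \<delta>"
    using A3_unif by blast
  define c where "c = e \<epsilon>"
  have cpos: "c > 0" using epos eps_pos by (simp add: c_def)
  define y0 where "y0 = (\<lambda>\<theta>. gen_inv (G \<theta>) \<alpha>)"
  have Gy0: "G \<theta> (y0 \<theta>) = \<alpha>" if th: "\<theta> \<in> \<Theta>" for \<theta>
  proof -
    interpret Pt: prob_space "P \<theta>" using P_prob[OF th] .
    have sp: "space (P \<theta>) = UNIV" using P_sets[OF th] by (metis sets_eq_imp_space_eq space_borel)
    have em: "\<eta> \<in> borel_measurable (P \<theta>)"
      using eta_meas measurable_cong_sets[OF P_sets[OF th] refl] by blast
    have rd: "real_distribution (distr (P \<theta>) borel \<eta>)"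
      by (rule Pt.real_distribution_distr) (use em in simp)
    have Geq: "G \<theta> = cdf (distr (P \<theta>) borel \<eta>)"
    proof
      fix y
      have "cdf (distr (P \<theta>) borel \<eta>) y = measure (P \<theta>) (\<eta> -` {..y} \<inter> space (P \<theta>))"
        unfolding cdf_def by (rule measure_distr) (use em in auto)
      then show "G \<theta> y = cdf (distr (P \<theta>) borel \<eta>) y" using G_def[OF th] sp by (simp add: vimage_def)
    qed
    show ?thesis unfolding y0_def Geq
      by (rule cdf_inv[OF real_distribution.cdf_lim_at_top_prob[OF rd] finite_borel_measure.cdf_lim_at_bot[OF real_distribution.finite_borel_measure_M[OF rd]]])
         (use A2[OF th] Geq alpha in auto)
  qed
  have up: "G \<theta> (y0 \<theta> + \<epsilon>) \<ge> \<alpha> + c" and lo: "G \<theta> (y0 \<theta> - \<epsilon>) \<le> \<alpha> - c" if th: "\<theta> \<in> \<Theta>" for \<theta>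
    using eb th eps_pos Gy0[OF th] unfolding c_def y0_def by force+
  have bound: "measure M {\<omega> \<in> space M. \<exists>\<theta>\<in>\<Theta>n n.
            \<bar>gen_inv (\<lambda>y. (\<Sum>i\<in>{1..n}. if \<eta> (X n \<theta> i \<omega>) \<le> y then 1 else 0) / real n) \<alpha>
             - gen_inv (G \<theta>) \<alpha>\<bar> > \<epsilon>} \<le> 2 * K * real n powr \<beta> * exp (- (2*c^2) * real n)"
    if n: "n \<ge> 1" for n
  proof -
    define T where "T = \<Theta>n n"
    define Ap where "Ap = (\<lambda>\<theta>. {\<omega>\<in>space M. (\<Sum>i\<in>{1..n}. if \<eta> (X n \<theta> i \<omega>) \<le> y0 \<theta> + \<epsilon> then 1 else 0::real) \<le> real n * measure (P \<theta>) {z. \<eta> z \<le> y0 \<theta> + \<epsilon>} - real n*c})"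
    define Am where "Am = (\<lambda>\<theta>. {\<omega>\<in>space M. (\<Sum>i\<in>{1..n}. if \<eta> (X n \<theta> i \<omega>) \<le> y0 \<theta> - \<epsilon> then 1 else 0::real) \<ge> real n * measure (P \<theta>) {z. \<eta> z \<le> y0 \<theta> - \<epsilon>} + real n*c})"
    have cc: "c \<ge> 0" using cpos by simp
    have Apm: "Ap \<theta> \<in> sets M" and Amm: "Am \<theta> \<in> sets M"
      and Apb: "measure M (Ap \<theta>) \<le> exp (-2*real n*c^2)" and Amb: "measure M (Am \<theta>) \<le> exp (-2*real n*c^2)"
      if th: "\<theta> \<in> T" for \<theta>
      using hoeff_ind[OF M_prob n X_indep[OF n th[unfolded T_def]] X_distr[OF n th[unfolded T_def]] eta_meas cc]
      unfolding Ap_def Am_def by blast+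
    have sub: "{\<omega> \<in> space M. \<exists>\<theta>\<in>\<Theta>n n.
            \<bar>gen_inv (\<lambda>y. (\<Sum>i\<in>{1..n}. if \<eta> (X n \<theta> i \<omega>) \<le> y then 1 else 0) / real n) \<alpha>
             - gen_inv (G \<theta>) \<alpha>\<bar> > \<epsilon>} \<subseteq> (\<Union>\<theta>\<in>T. Ap \<theta> \<union> Am \<theta>)"
    proof
      fix \<omega> assume "\<omega> \<in> {\<omega> \<in> space M. \<exists>\<theta>\<in>\<Theta>n n.
            \<bar>gen_inv (\<lambda>y. (\<Sum>i\<in>{1..n}. if \<eta> (X n \<theta> i \<omega>) \<le> y then 1 else 0) / real n) \<alpha>
             - gen_inv (G \<theta>) \<alpha>\<bar> > \<epsilon>}"
      then obtain \<theta> where om: "\<omega> \<in> space M" and th: "\<theta> \<in> T" and big: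
        "\<bar>gen_inv (\<lambda>y. (\<Sum>i\<in>{1..n}. if \<eta> (X n \<theta> i \<omega>) \<le> y then 1 else 0) / real n) \<alpha>
             - y0 \<theta>\<bar> > \<epsilon>" unfolding T_def y0_def by blast
      have thT: "\<theta> \<in> \<Theta>" using th grid_sub[OF n] unfolding T_def by blast
      have npos: "real n > 0" using n by simp
      define s1 where "s1 = (\<Sum>i\<in>{1..n}. if \<eta> (X n \<theta> i \<omega>) \<le> y0 \<theta> + \<epsilon> then 1 else 0::real)"
      define s2 where "s2 = (\<Sum>i\<in>{1..n}. if \<eta> (X n \<theta> i \<omega>) \<le> y0 \<theta> - \<epsilon> then 1 else 0::real)"
      have disj: "s1 / real n < \<alpha> \<or> s2 / real n \<ge> \<alpha>"
        using emp_inv[OF n alpha(1) _ big] alpha(2) unfolding s1_def s2_def by simp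
      have G1: "measure (P \<theta>) {z. \<eta> z \<le> y0 \<theta> + \<epsilon>} = G \<theta> (y0 \<theta> + \<epsilon>)" using G_def[OF thT] by simp
      have G2: "measure (P \<theta>) {z. \<eta> z \<le> y0 \<theta> - \<epsilon>} = G \<theta> (y0 \<theta> - \<epsilon>)" using G_def[OF thT] by simp
      show "\<omega> \<in> (\<Union>\<theta>\<in>T. Ap \<theta> \<union> Am \<theta>)"
      proof (cases "s1 / real n < \<alpha>")
        case True
        then have "s1 < \<alpha> * n" using npos by (simp add: pos_divide_less_eq)
        moreover have "\<alpha> * n \<le> (G \<theta> (y0 \<theta> + \<epsilon>) - c) * n"
          using up[OF thT] npos by (intro mult_right_mono) auto
        ultimately have "s1 \<le> real n * G \<theta> (y0 \<theta> + \<epsilon>) - real n * c" by (simp add: algebra_simps)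
        then have "\<omega> \<in> Ap \<theta>" unfolding Ap_def G1 s1_def using om by simp
        then show ?thesis using th by blast
      next
        case False
        then have "s2 / real n \<ge> \<alpha>" using disj by simp
        then have "s2 \<ge> \<alpha> * n" using npos by (simp add: pos_le_divide_eq)
        moreover have "\<alpha> * n \<ge> (G \<theta> (y0 \<theta> - \<epsilon>) + c) * n"
          using lo[OF thT] npos by (intro mult_right_mono) auto
        ultimately have "s2 \<ge> real n * G \<theta> (y0 \<theta> - \<epsilon>) + real n * c" by (simp add: algebra_simps)
        then have "\<omega> \<in> Am \<theta>" unfolding Am_def G2 s2_def using om by simp
        then show ?thesis using th by blast
      qed
    qed
    have fin: "finite T" using grid_fin[OF n] unfolding T_def .
    have Um: "(\<Union>\<theta>\<in>T. Ap \<theta> \<union> Am \<theta>) \<in> sets M" using fin Apm Amm by blast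
    have "measure M {\<omega> \<in> space M. \<exists>\<theta>\<in>\<Theta>n n.
            \<bar>gen_inv (\<lambda>y. (\<Sum>i\<in>{1..n}. if \<eta> (X n \<theta> i \<omega>) \<le> y then 1 else 0) / real n) \<alpha>
             - gen_inv (G \<theta>) \<alpha>\<bar> > \<epsilon>} \<le> measure M (\<Union>\<theta>\<in>T. Ap \<theta> \<union> Am \<theta>)"
      by (rule Mp.finite_measure_mono[OF sub Um])
    also have "\<dots> \<le> (\<Sum>\<theta>\<in>T. measure M (Ap \<theta> \<union> Am \<theta>))"
      by (rule measure_UNION_le[OF fin]) (use Apm Amm in blast)
    also have "\<dots> \<le> (\<Sum>\<theta>\<in>T. 2 * exp (-2*real n*c^2))"
    proof (rule sum_mono)
      fix \<theta> assume th: "\<theta> \<in> T"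
      have "measure M (Ap \<theta> \<union> Am \<theta>) \<le> measure M (Ap \<theta>) + measure M (Am \<theta>)"
        by (rule measure_subadditive[OF Apm[OF th] Amm[OF th]]) (simp_all add: Mp.emeasure_finite)
      then show "measure M (Ap \<theta> \<union> Am \<theta>) \<le> 2 * exp (-2*real n*c^2)" using Apb[OF th] Amb[OF th] by simp
    qed
    also have "\<dots> = real (card T) * (2 * exp (-2*real n*c^2))" by simp
    also have "\<dots> \<le> (K * real n powr \<beta>) * (2 * exp (-2*real n*c^2))"
      by (rule mult_right_mono) (use grid_card[OF n] in \<open>auto simp: T_def\<close>)
    also have "\<dots> = 2 * K * real n powr \<beta> * exp (- (2*c^2) * real n)" by (simp add: mult_ac)
    finally show ?thesis .
  qed
  have lim: "(\<lambda>n::nat. 2 * K * real n powr \<beta> * exp (- (2*c^2) * real n)) \<longlonglongrightarrow> 0"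
    by (rule lim_test) (use cpos in simp)
  show ?thesis
    apply (rule tendsto_sandwich[OF _ _ tendsto_const lim])
     apply (rule always_eventually)
     apply simp
    apply (rule eventually_sequentiallyI[of 1])
    apply (erule bound)
    done
qed

end
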